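(* Let $F_1,F_2\in\mathbb C^{(2n+m)\times(n+m)}$ be nonzero, $\alpha:=\|F_1\|_2$, $\beta:=\|F_2\|_2$, and $g(\gamma):=\big\|[\,\gamma F_1,\ F_2/\gamma\,]\big\|_2^2$ for $\gamma>0$. Then in the minimization problem $\min_{0<\gamma<\infty}g(\gamma)$ the infinite search interval can be replaced by the closed interval $[\gamma_{lo},\gamma_{up}]=\big[\sqrt{\beta/(2\alpha)},\sqrt{2\beta/\alpha}\big]$, i.e. $\inf_{\gamma>0}g(\gamma)=\min_{\gamma\in[\gamma_{lo},\gamma_{up}]}g(\gamma)$. Moreover, $g(\gamma^{gm})$ with $\gamma^{gm}:=\sqrt{\beta/\alpha}$ is an upper bound for this minimum.
   Context: $\|\cdot\|_2$ denotes the spectral norm (largest singular value); $[\,\gamma F_1,\ F_2/\gamma\,]$ is the horizontal concatenation of the two matrices. *)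

theory Defs
  imports "HOL-Analysis.Analysis"
begin

text \<open>Spectral norm (operator 2-norm) of a complex matrix: the operator norm of
  x \<mapsto> A x with respect to the Euclidean norms.\<close>
definition spec_norm :: "complex ^ 'c ^ 'r \<Rightarrow> real" where
  "spec_norm A = onorm (\<lambda>x. A *v x)"

text \<open>Horizontal concatenation [A, B] of two matrices with the same number of rows;
  the columns of A are indexed by Inl, those of B by Inr.\<close>
definition hcat :: "complex ^ 'c ^ 'r \<Rightarrow> complex ^ 'd ^ 'r \<Rightarrow> complex ^ ('c + 'd) ^ 'r" where
  "hcat A B = (\<chi> i j. case j of Inl k \<Rightarrow> A $ i $ k | Inr k \<Rightarrow> B $ i $ k)"

end

theory Submission
  imports Defs
begin

lemma mv_scaleR: "((c::real) *\<^sub>R (A::complex^'c^'r)) *v x = c *\<^sub>R (A *v x)"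
  by (simp add: vec_eq_iff matrix_vector_mult_def scaleR_sum_right)

lemma hcat_split: "hcat ((a::real) *\<^sub>R A) (b *\<^sub>R B) = a *\<^sub>R hcat A 0 + b *\<^sub>R hcat 0 B"
  by (simp add: vec_eq_iff hcat_def split: sum.split)

lemma sum_UNIV_Plus: "(\<Sum>j\<in>(UNIV::('a::finite+'b::finite) set). f j) = (\<Sum>k\<in>UNIV. f (Inl k)) + (\<Sum>k\<in>UNIV. f (Inr k))"
  using sum.Plus[of "UNIV::'a set" "UNIV::'b set" f] by (simp add: UNIV_Plus_UNIV comp_def)

lemma zero_chi: "(\<chi> k. 0) = 0"
  by (simp add: vec_eq_iff)

lemma hcat_mv: "hcat A B *v y = A *v (\<chi> k. y$Inl k) + B *v (\<chi> k. y$Inr k)"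
  by (simp add: vec_eq_iff matrix_vector_mult_def sum_UNIV_Plus hcat_def)

lemma norm_sq_vec: "norm (z::complex^'e::finite) ^ 2 = (\<Sum>i\<in>UNIV. norm (z$i) ^ 2)"
  by (simp add: norm_vec_def L2_set_def sum_nonneg)

lemma norm_split: "norm (y::complex^('c::finite+'d::finite)) ^ 2 = norm (\<chi> k. y$Inl k) ^ 2 + norm (\<chi> k. y$Inr k) ^ 2"
  by (simp add: norm_sq_vec sum_UNIV_Plus)

lemma spec_norm_scale: "spec_norm ((c::real) *\<^sub>R (A::complex^'c^'r)) = \<bar>c\<bar> * spec_norm A"
  unfolding spec_norm_def mv_scaleR by (simp add: onorm_scaleR)

lemma spec_norm_pos: "(A::complex^'c^'r) \<noteq> 0 \<Longrightarrow> spec_norm A > 0"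
  unfolding spec_norm_def
  by (metis matrix_eq matrix_vector_mult_0 onorm_pos_lt matrix_vector_mul_bounded_linear)

lemma lower1: "spec_norm (A::complex^'c^'r) \<le> spec_norm (hcat A (B::complex^'d^'r))"
  unfolding spec_norm_def
proof (rule onorm_bound)
  show "0 \<le> onorm ((*v) (hcat A B))" by (simp add: onorm_pos_le)
  fix x :: "complex^'c"
  define y :: "complex^('c+'d)" where "y = (\<chi> j. case j of Inl k \<Rightarrow> x$k | Inr _ \<Rightarrow> 0)"
  have "hcat A B *v y = A *v x" by (simp add: hcat_mv y_def zero_chi)
  moreover have "norm y = norm x"
    using norm_split[of y] by (simp add: y_def zero_chi)
  ultimately show "norm (A *v x) \<le> onorm ((*v) (hcat A B)) * norm x"
    by (metis onorm matrix_vector_mul_bounded_linear)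
qed

lemma lower2: "spec_norm (B::complex^'d^'r) \<le> spec_norm (hcat (A::complex^'c^'r) B)"
  unfolding spec_norm_def
proof (rule onorm_bound)
  show "0 \<le> onorm ((*v) (hcat A B))" by (simp add: onorm_pos_le)
  fix x :: "complex^'d"
  define y :: "complex^('c+'d)" where "y = (\<chi> j. case j of Inr k \<Rightarrow> x$k | Inl _ \<Rightarrow> 0)"
  have "hcat A B *v y = B *v x" by (simp add: hcat_mv y_def zero_chi)
  moreover have "norm y = norm x"
    using norm_split[of y] by (simp add: y_def zero_chi)
  ultimately show "norm (B *v x) \<le> onorm ((*v) (hcat A B)) * norm x"
    by (metis onorm matrix_vector_mul_bounded_linear)
qed

lemma cs: "(a::real) \<ge> 0 \<Longrightarrow> b \<ge> 0 \<Longrightarrow> x \<ge> 0 \<Longrightarrow> y \<ge> 0 \<Longrightarrow> a*x + b*y \<le> sqrt (a^2+b^2) * sqrt (x^2+y^2)"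
proof -
  assume h: "a \<ge> 0" "b \<ge> 0" "x \<ge> 0" "y \<ge> 0"
  have "(a*x+b*y)^2 \<le> (a^2+b^2)*(x^2+y^2)"
    using sum_squares_ge_zero[of "a*y - b*x" 0] by (simp add: power2_eq_square algebra_simps)
  then have "sqrt ((a*x+b*y)^2) \<le> sqrt ((a^2+b^2)*(x^2+y^2))" by (rule real_sqrt_le_mono)
  then show ?thesis using h by (simp add: real_sqrt_mult)
qed

lemma upper: "spec_norm (hcat (A::complex^'c^'r) (B::complex^'d^'r)) \<le> sqrt (spec_norm A ^ 2 + spec_norm B ^ 2)"
  unfolding spec_norm_def
proof (rule onorm_bound)
  show "0 \<le> sqrt (onorm ((*v) A) ^ 2 + onorm ((*v) B) ^ 2)" by simp
  fix y :: "complex^('c+'d)"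
  let ?l = "(\<chi> k. y$Inl k)" and ?r = "(\<chi> k. y$Inr k)"
  have "norm (hcat A B *v y) \<le> norm (A *v ?l) + norm (B *v ?r)"
    by (simp add: hcat_mv norm_triangle_ineq)
  also have "\<dots> \<le> onorm ((*v) A) * norm ?l + onorm ((*v) B) * norm ?r"
    by (intro add_mono onorm matrix_vector_mul_bounded_linear)
  also have "\<dots> \<le> sqrt (onorm ((*v) A) ^ 2 + onorm ((*v) B) ^ 2) * sqrt (norm ?l ^2 + norm ?r ^2)"
    by (intro cs onorm_pos_le matrix_vector_mul_bounded_linear norm_ge_zero)
  also have "sqrt (norm ?l ^2 + norm ?r ^2) = norm y"
    by (simp add: norm_split[of y, symmetric])
  finally show "norm (hcat A B *v y) \<le> sqrt (onorm ((*v) A) ^ 2 + onorm ((*v) B) ^ 2) * norm y" .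
qed

lemma spec_norm_blinfun: "spec_norm (M::complex^'c^'r) = norm (Blinfun ((*v) M))"
  by (simp add: spec_norm_def norm_blinfun.rep_eq bounded_linear_Blinfun_apply)

lemma cont: "continuous_on S (\<lambda>\<gamma>::real. spec_norm (hcat (\<gamma> *\<^sub>R (A::complex^'c^'r)) ((1/\<gamma>) *\<^sub>R (B::complex^'d^'r))))"
  if "0 \<notin> S"
proof -
  have "\<And>\<gamma>. spec_norm (hcat (\<gamma> *\<^sub>R A) ((1/\<gamma>) *\<^sub>R B))
     = norm (\<gamma> *\<^sub>R Blinfun ((*v) (hcat A 0)) + (1/\<gamma>) *\<^sub>R Blinfun ((*v) (hcat 0 B)))"
    unfolding spec_norm_blinfun hcat_split
    by (rule arg_cong[where f=norm], rule blinfun_eqI)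
      (simp add: bounded_linear_Blinfun_apply matrix_vector_mult_add_rdistrib mv_scaleR plus_blinfun.rep_eq scaleR_blinfun.rep_eq)
  moreover have "continuous_on S (\<lambda>\<gamma>::real. norm (\<gamma> *\<^sub>R Blinfun ((*v) (hcat A 0)) + (1/\<gamma>) *\<^sub>R Blinfun ((*v) (hcat 0 B))))"
    using that by (intro continuous_intros) auto
  ultimately show ?thesis by simp
qed


theorem lemma10p1:
  fixes F1 F2 :: "complex ^ 'c ^ 'r" and n m :: nat
    and \<alpha> \<beta> :: real and g :: "real \<Rightarrow> real"
  assumes "CARD('r) = 2 * n + m" and "CARD('c) = n + m"
    and "F1 \<noteq> 0" and "F2 \<noteq> 0"
    and "\<alpha> = spec_norm F1" and "\<beta> = spec_norm F2"
    and "\<And>\<gamma>. g \<gamma> = (spec_norm (hcat (\<gamma> *\<^sub>R F1) ((1 / \<gamma>) *\<^sub>R F2))) ^ 2"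
  shows "\<exists>\<gamma>0 \<in> {sqrt (\<beta> / (2 * \<alpha>)) .. sqrt (2 * \<beta> / \<alpha>)}.
           g \<gamma>0 = (INF \<gamma>\<in>{0<..}. g \<gamma>)
         \<and> (\<forall>\<gamma>>0. g \<gamma>0 \<le> g \<gamma>)
         \<and> g \<gamma>0 \<le> g (sqrt (\<beta> / \<alpha>))"
proof -
  have a: "\<alpha> > 0" and b: "\<beta> > 0" using assms(3-6) spec_norm_pos by auto
  define lo where "lo = sqrt (\<beta> / (2 * \<alpha>))"
  define up where "up = sqrt (2 * \<beta> / \<alpha>)"
  define gm where "gm = sqrt (\<beta> / \<alpha>)"
  have lo: "lo > 0" "lo ^ 2 = \<beta> / (2 * \<alpha>)" using a b by (auto simp: lo_def)
  have up: "up > 0" "up ^ 2 = 2 * \<beta> / \<alpha>" using a b by (auto simp: up_def)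
  have gm: "gm > 0" "gm ^ 2 = \<beta> / \<alpha>" using a b by (auto simp: gm_def)
  have gmI: "gm \<in> {lo..up}" unfolding lo_def up_def gm_def using a b
    by (auto intro!: real_sqrt_le_mono simp: field_simps)
  define h where "h \<gamma> = spec_norm (hcat (\<gamma> *\<^sub>R F1) ((1 / \<gamma>) *\<^sub>R F2))" for \<gamma>
  have gh: "g \<gamma> = h \<gamma> ^ 2" for \<gamma> using assms(7) h_def by simp
  have l1: "\<gamma> * \<alpha> \<le> h \<gamma>" if "\<gamma> > 0" for \<gamma>
    using lower1[of "\<gamma> *\<^sub>R F1" "(1 / \<gamma>) *\<^sub>R F2"] that
    by (simp add: h_def spec_norm_scale assms(5))
  have l2: "\<beta> / \<gamma> \<le> h \<gamma>" if "\<gamma> > 0" for \<gamma>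
    using lower2[of "(1 / \<gamma>) *\<^sub>R F2" "\<gamma> *\<^sub>R F1"] that
    by (simp add: h_def spec_norm_scale assms(6))
  have g1: "(\<gamma> * \<alpha>)^2 \<le> g \<gamma>" if "\<gamma> > 0" for \<gamma>
    using l1[OF that] that a gh by (simp add: power_mono)
  have g2: "(\<beta> / \<gamma>)^2 \<le> g \<gamma>" if "\<gamma> > 0" for \<gamma>
    using l2[OF that] that b gh by (simp add: power_mono)
  have ggm: "g gm \<le> 2 * \<alpha> * \<beta>"
  proof -
    have "h gm \<le> sqrt ((gm * \<alpha>)^2 + (\<beta> / gm)^2)"
      using upper[of "gm *\<^sub>R F1" "(1 / gm) *\<^sub>R F2"] gm a b
      by (simp add: h_def spec_norm_scale assms(5,6))
    then have "g gm \<le> (gm * \<alpha>)^2 + (\<beta> / gm)^2"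
      unfolding gh using a b gm
      by (metis norm_ge_zero spec_norm_def h_def onorm_pos_le matrix_vector_mul_bounded_linear power_mono real_sqrt_pow2 add_nonneg_nonneg zero_le_power2)
    also have "\<dots> = 2 * \<alpha> * \<beta>"
      using gm a b by (simp add: power_mult_distrib power_divide field_simps power2_eq_square)
    finally show ?thesis .
  qed
  have cg: "continuous_on {lo..up} g"
  proof -
    have "continuous_on {lo..up} h" unfolding h_def using lo by (intro cont) auto
    then show ?thesis unfolding gh by (intro continuous_intros)
  qed
  obtain \<gamma>0 where g0: "\<gamma>0 \<in> {lo..up}" "\<forall>y\<in>{lo..up}. g \<gamma>0 \<le> g y"
    using continuous_attains_inf[OF compact_Icc _ cg] lo up gmI by auto
  have all: "g \<gamma>0 \<le> g \<gamma>" if "\<gamma> > 0" for \<gamma>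
  proof (cases "\<gamma> \<in> {lo..up}")
    case True then show ?thesis using g0 by auto
  next
    case False
    have "2 * \<alpha> * \<beta> < g \<gamma>"
    proof (cases "\<gamma> < lo")
      case True
      then have "\<gamma>^2 < lo^2" using that by (simp add: power_strict_mono)
      then have "\<gamma>^2 < \<beta> / (2 * \<alpha>)" using lo by simp
      then have "2 * \<alpha> * \<beta> < (\<beta> / \<gamma>)^2" using a b that
        by (simp add: power_divide field_simps power2_eq_square)
      then show ?thesis using g2[OF that] by linarith
    next
      case False
      then have "up < \<gamma>" using \<open>\<gamma> \<notin> {lo..up}\<close> by auto
      then have "up^2 < \<gamma>^2" using up(1) by (intro power_strict_mono) auto
      then have "2 * \<beta> / \<alpha> < \<gamma>^2" using up by simp
      then have "2 * \<alpha> * \<beta> < (\<gamma> * \<alpha>)^2" using a b that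
        by (simp add: power_mult_distrib field_simps power2_eq_square)
      then show ?thesis using g1[OF that] by linarith
    qed
    moreover have "g \<gamma>0 \<le> g gm" using g0 gmI by auto
    ultimately show ?thesis using ggm by linarith
  qed
  have "(INF \<gamma>\<in>{0<..}. g \<gamma>) = g \<gamma>0"
    using g0(1) lo all by (intro cInf_eq_minimum) auto
  then show ?thesis using g0 gmI all
    unfolding lo_def[symmetric] up_def[symmetric] gm_def[symmetric] by auto
qed

end
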